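(* Let $\Omega\subset\mathbb{R}^d$ be a bounded Lipschitz domain with an oriented Whitney covering $\mathcal W$, let $b>a>d-1$ and let $Q\in\mathcal W$. Then $$\sum_{S\in\mathcal W}\frac{\ell(S)^a}{\mathrm D(Q,S)^b}\le C\,\ell(Q)^{a-b},$$ with $C$ depending only on $a$, $b$ and $d$.
   Context: A Whitney covering of $\Omega$ is a family $\mathcal W$ of dyadic cubes with pairwise disjoint interiors whose union is $\Omega$, with $C_{\mathcal W}\ell(Q)\le\operatorname{dist}(Q,\partial\Omega)\le4C_{\mathcal W}\ell(Q)$, neighbouring cubes satisfying $\ell(Q)\le2\ell(S)$, and $\sum_{Q}\chi_{10Q}\le C$. An oriented Whitney covering is such a covering (with suitably chosen Whitney constants) together with a finite family of boundary windows of the Lipschitz domain, a distinguished central cube and a chain structure connecting cubes; only the cubes enter this statement. $\ell(Q)$ is the side length and $\mathrm D(Q,S)=\ell(Q)+\ell(S)+\operatorname{dist}(Q,S)$ is the long distance. *)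

theory Defs
  imports "HOL-Analysis.Analysis"
begin

text \<open>Closed dyadic cube of generation m with integer corner index k (only k on Basis matters).\<close>
definition dyad :: "int \<Rightarrow> ('a::euclidean_space \<Rightarrow> int) \<Rightarrow> 'a set" where
  "dyad m k = {x. \<forall>i\<in>Basis. of_int (k i) * 2 powr (- real_of_int m) \<le> x \<bullet> i
                          \<and> x \<bullet> i \<le> (of_int (k i) + 1) * 2 powr (- real_of_int m)}"

definition dyadic_cube :: "'a::euclidean_space set \<Rightarrow> bool" where
  "dyadic_cube Q \<longleftrightarrow> (\<exists>m k. Q = dyad m k)"

definition sidelen :: "'a::euclidean_space set \<Rightarrow> real" where
  "sidelen Q = (THE s. \<exists>m k. Q = dyad m k \<and> s = 2 powr (- real_of_int m))"

definition cube_dilate :: "real \<Rightarrow> 'a::euclidean_space set \<Rightarrow> 'a set" where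
  "cube_dilate t Q = {x. \<exists>m k. Q = dyad m k \<and>
      (\<forall>i\<in>Basis. \<bar>x \<bullet> i - (of_int (k i) + 1/2) * 2 powr (- real_of_int m)\<bar>
                   \<le> t / 2 * 2 powr (- real_of_int m))}"

definition long_dist :: "'a::euclidean_space set \<Rightarrow> 'a set \<Rightarrow> real" where
  "long_dist Q S = sidelen Q + sidelen S + setdist Q S"

definition lipschitz_domain :: "'a::euclidean_space set \<Rightarrow> bool" where
  "lipschitz_domain \<Omega> \<longleftrightarrow> open \<Omega> \<and> connected \<Omega> \<and> \<Omega> \<noteq> {} \<and> bounded \<Omega> \<and>
    (\<forall>p\<in>frontier \<Omega>. \<exists>e r h \<phi> M. norm e = 1 \<and> r > 0 \<and> h > 0 \<and>
        M-lipschitz_on {y. y \<bullet> e = 0} (\<phi> :: 'a \<Rightarrow> real) \<and>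
        (\<forall>y. y \<bullet> e = 0 \<longrightarrow> norm (y - (p - (p \<bullet> e) *\<^sub>R e)) < r \<longrightarrow> \<bar>\<phi> y - p \<bullet> e\<bar> < h / 2) \<and>
        (\<forall>x. norm ((x - (x \<bullet> e) *\<^sub>R e) - (p - (p \<bullet> e) *\<^sub>R e)) < r \<longrightarrow> \<bar>x \<bullet> e - p \<bullet> e\<bar> < h \<longrightarrow>
             (x \<in> \<Omega> \<longleftrightarrow> x \<bullet> e > \<phi> (x - (x \<bullet> e) *\<^sub>R e))))"

definition whitney_covering :: "'a::euclidean_space set \<Rightarrow> 'a set set \<Rightarrow> bool" where
  "whitney_covering \<Omega> W \<longleftrightarrow>
    (\<forall>Q\<in>W. dyadic_cube Q) \<and>
    (\<forall>Q\<in>W. \<forall>S\<in>W. Q \<noteq> S \<longrightarrow> interior Q \<inter> interior S = {}) \<and>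
    \<Union>W = \<Omega> \<and>
    (\<exists>CW>0. \<forall>Q\<in>W. CW * sidelen Q \<le> setdist Q (frontier \<Omega>) \<and>
                    setdist Q (frontier \<Omega>) \<le> 4 * CW * sidelen Q) \<and>
    (\<forall>Q\<in>W. \<forall>S\<in>W. Q \<inter> S \<noteq> {} \<longrightarrow> sidelen Q \<le> 2 * sidelen S) \<and>
    (\<exists>N::nat. \<forall>x. finite {Q\<in>W. x \<in> cube_dilate 10 Q} \<and> card {Q\<in>W. x \<in> cube_dilate 10 Q} \<le> N)"

end

theory Submission
  imports Defs
begin


definition lo :: "int \<Rightarrow> ('a::euclidean_space \<Rightarrow> int) \<Rightarrow> 'a" where
  "lo m k = (\<Sum>i\<in>Basis. (of_int (k i) * 2 powr (- real_of_int m)) *\<^sub>R i)"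
definition hi :: "int \<Rightarrow> ('a::euclidean_space \<Rightarrow> int) \<Rightarrow> 'a" where
  "hi m k = (\<Sum>i\<in>Basis. ((of_int (k i) + 1) * 2 powr (- real_of_int m)) *\<^sub>R i)"

lemma dyad_cbox: "dyad m k = cbox (lo m k) (hi m k)"
  by (auto simp: dyad_def mem_box lo_def hi_def inner_sum_left_Basis)

lemma lo_hi_inner: "i \<in> Basis \<Longrightarrow> lo m k \<bullet> i = of_int (k i) * 2 powr (- real_of_int m)"
  "i \<in> Basis \<Longrightarrow> hi m k \<bullet> i = (of_int (k i) + 1) * 2 powr (- real_of_int m)"
  by (auto simp: lo_def hi_def inner_sum_left_Basis)

lemma lo_in: "lo m k \<in> dyad m k" and hi_in: "hi m k \<in> dyad m k"
  by (auto simp: dyad_cbox mem_box lo_hi_inner)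

lemma dyad_eq_imp: assumes "dyad m k = dyad m' k'" shows "m = m'"
proof -
  obtain i :: 'a where i: "i \<in> Basis" using nonempty_Basis by blast
  have "lo m k \<in> dyad m' k'" "hi m k \<in> dyad m' k'" "lo m' k' \<in> dyad m k" "hi m' k' \<in> dyad m k"
    using lo_in hi_in assms by metis+
  hence "lo m k \<bullet> i = lo m' k' \<bullet> i" "hi m k \<bullet> i = hi m' k' \<bullet> i"
    using i by (auto simp: dyad_cbox mem_box intro: order.antisym)
  hence "(2::real) powr (- real_of_int m) = 2 powr (- real_of_int m')"
    using i by (simp add: lo_hi_inner algebra_simps)
  thus ?thesis by (simp add: powr_inj)
qed

lemma sidelen_dyad: "sidelen (dyad m k) = 2 powr (- real_of_int m)"
  unfolding sidelen_def
  by (rule the_equality) (auto dest: dyad_eq_imp)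

lemma measure_dyad: "measure lebesgue (dyad m k :: 'a::euclidean_space set) = sidelen (dyad m k) ^ DIM('a)"
proof -
  have "measure lebesgue (dyad m k :: 'a set) = measure lborel (cbox (lo m k) (hi m k) :: 'a set)"
    by (simp add: dyad_cbox measure_completion)
  also have "\<dots> = (\<Prod>i\<in>(Basis::'a set). 2 powr (- real_of_int m))"
    by (subst measure_lborel_cbox_eq) (auto simp: lo_hi_inner algebra_simps)
  finally show ?thesis by (simp add: sidelen_dyad)
qed

lemma dyad_diam: assumes "x \<in> dyad m k" "y \<in> dyad m k"
  shows "dist x y \<le> real DIM('a) * sidelen (dyad m k :: 'a::euclidean_space set)"
proof -
  have "dist x y \<le> (\<Sum>b\<in>(Basis::'a set). \<bar>(x - y) \<bullet> b\<bar>)" by (simp add: dist_norm norm_le_l1)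
  also have "\<dots> \<le> (\<Sum>b\<in>(Basis::'a set). 2 powr (- real_of_int m))"
  proof (rule sum_mono)
    fix b :: 'a assume b: "b \<in> Basis"
    thus "\<bar>(x - y) \<bullet> b\<bar> \<le> 2 powr (- real_of_int m)"
      using assms by (auto simp: dyad_def inner_diff_left abs_le_iff algebra_simps dest!: bspec[OF _ b])
  qed
  finally show ?thesis by (simp add: sidelen_dyad)
qed

lemma dyad_ne: "dyad m k \<noteq> {}" using lo_in by blast
lemma dyad_compact: "compact (dyad m k)" by (simp add: dyad_cbox)

lemma negligible_dyad_inter:
  assumes "interior (dyad m k) \<inter> interior (dyad m' k') = {}"
  shows "negligible (dyad m k \<inter> dyad m' k' :: 'a::euclidean_space set)"
proof -
  have "dyad m k \<inter> dyad m' k' \<subseteq> (cbox (lo m k) (hi m k) - box (lo m k) (hi m k)) \<union> (cbox (lo m' k') (hi m' k') - box (lo m' k') (hi m' k'))"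
    using assms by (auto simp: dyad_cbox interior_cbox)
  thus ?thesis
    by (rule negligible_subset[rotated]) (simp add: negligible_frontier_interval)
qed



lemma setdist_frontier_le:
  fixes x y :: "'a::euclidean_space"
  assumes "x \<in> \<Omega>" "y \<notin> \<Omega>"
  shows "setdist {x} (frontier \<Omega>) \<le> dist x y"
proof -
  have "closed_segment x y \<inter> frontier \<Omega> \<noteq> {}"
    by (rule connected_Int_frontier) (use assms in auto)
  then obtain z where z: "z \<in> closed_segment x y" "z \<in> frontier \<Omega>" by blast
  have "setdist {x} (frontier \<Omega>) \<le> dist x z" by (rule setdist_le_dist) (use z in auto)
  also have "\<dots> \<le> dist x y" using dist_in_closed_segment[OF z(1)] by (simp add: dist_commute)
  finally show ?thesis .
qed

lemma setdist_frontier_ge: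
  fixes x :: "'a::euclidean_space"
  assumes "open \<Omega>" "frontier \<Omega> \<noteq> {}" "ball x \<rho> \<subseteq> \<Omega>"
  shows "\<rho> \<le> setdist {x} (frontier \<Omega>)"
proof (rule le_setdistI)
  fix u z assume u: "u \<in> {x}" and z: "z \<in> frontier \<Omega>"
  have "z \<notin> \<Omega>" using z assms(1) frontier_disjoint_eq by blast
  hence "z \<notin> ball x \<rho>" using assms(3) by blast
  thus "\<rho> \<le> dist u z" using u by (simp add: dist_commute)
qed (use assms in auto)

definition pr :: "'a::real_inner \<Rightarrow> 'a \<Rightarrow> 'a" where "pr e x = x - (x \<bullet> e) *\<^sub>R e"

lemma pr_orth: "norm e = 1 \<Longrightarrow> pr e x \<bullet> e = 0"
  by (simp add: pr_def inner_diff_left dot_square_norm)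

lemma pr_add: "norm e = 1 \<Longrightarrow> pr e (x + t *\<^sub>R e) = pr e x"
  by (simp add: pr_def inner_add_left dot_square_norm algebra_simps)

lemma pr_diff: "pr e x - pr e y = pr e (x - y)"
  by (simp add: pr_def inner_diff_left algebra_simps)

lemma norm_pr_le: assumes "norm e = 1" shows "norm (pr e v) \<le> norm v"
proof -
  have ee: "e \<bullet> e = 1" using assms by (simp add: dot_square_norm)
  have "pr e v \<bullet> pr e v = v \<bullet> v - (v \<bullet> e)^2"
    unfolding pr_def inner_diff_left inner_diff_right inner_scaleR_left inner_scaleR_right ee
    by (simp add: inner_commute power2_eq_square)
  hence "norm (pr e v) ^ 2 = norm v ^ 2 - (v \<bullet> e)^2"
    by (simp only: power2_norm_eq_inner)
  hence "norm (pr e v) ^ 2 \<le> norm v ^ 2" by simp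
  thus ?thesis by (simp add: power2_le_iff_abs_le)
qed

lemma dist_pr_le: "norm e = 1 \<Longrightarrow> dist (pr e x) (pr e y) \<le> dist x y"
  by (simp add: dist_norm pr_diff norm_pr_le)

lemma abs_inner_le: "norm e = 1 \<Longrightarrow> \<bar>x \<bullet> e - y \<bullet> e\<bar> \<le> dist x y"
  by (metis Cauchy_Schwarz_ineq2 dist_norm inner_diff_left mult.right_neutral)



lemma half_lt: "(d::real) < q \<Longrightarrow> (d + q) / 2 < q" by (simp add: field_simps)

lemma chart_H:
  fixes \<Omega> :: "'a::euclidean_space set" and \<phi> :: "'a \<Rightarrow> real"
  assumes op: "open \<Omega>" and fne: "frontier \<Omega> \<noteq> {}" and e: "norm e = 1" and r: "r > 0" and h: "h > 0"
    and L: "M-lipschitz_on {y. y \<bullet> e = 0} \<phi>"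
    and gr: "\<forall>y. y \<bullet> e = 0 \<longrightarrow> norm (y - pr e p) < r \<longrightarrow> \<bar>\<phi> y - p \<bullet> e\<bar> < h / 2"
    and cyl: "\<forall>x. norm (pr e x - pr e p) < r \<longrightarrow> \<bar>x \<bullet> e - p \<bullet> e\<bar> < h \<longrightarrow> (x \<in> \<Omega> \<longleftrightarrow> x \<bullet> e > \<phi> (pr e x))"
    and x: "x \<in> \<Omega>" "norm (pr e x - pr e p) < r / 2" "\<bar>x \<bullet> e - p \<bullet> e\<bar> < h / 2"
    and dx: "setdist {x} (frontier \<Omega>) < min r h / 2"
  shows "setdist {x} (frontier \<Omega>) \<le> x \<bullet> e - \<phi> (pr e x) \<and>
         x \<bullet> e - \<phi> (pr e x) \<le> (1 + M) * setdist {x} (frontier \<Omega>)"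
proof -
  define \<delta> where "\<delta> = setdist {x} (frontier \<Omega>)"
  define H where "H = x \<bullet> e - \<phi> (pr e x)"
  have ee: "e \<bullet> e = 1" using e by (simp add: dot_square_norm)
  have M0: "0 \<le> M" using L lipschitz_on_nonneg by blast
  have pxo: "pr e x \<bullet> e = 0" using e pr_orth by blast
  have "norm (pr e x - pr e p) < r" "\<bar>x \<bullet> e - p \<bullet> e\<bar> < h" using x r h by auto
  hence Hpos: "H > 0" using cyl x(1) H_def by auto
  define g where "g = x + (- H) *\<^sub>R e"
  have pg: "pr e g = pr e x" unfolding g_def using e pr_add by blast
  have ge: "g \<bullet> e = \<phi> (pr e x)" by (simp add: g_def H_def inner_add_left ee)
  have "\<bar>\<phi> (pr e x) - p \<bullet> e\<bar> < h / 2" using gr pxo x(2) r by auto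
  hence "g \<notin> \<Omega>" using cyl[rule_format, of g] pg ge x(2) r h by auto
  hence "\<delta> \<le> dist x g" unfolding \<delta>_def by (rule setdist_frontier_le[OF x(1)])
  also have "dist x g = H" using Hpos e by (simp add: g_def dist_norm)
  finally have low: "\<delta> \<le> H" .
  have up: "H \<le> (1 + M) * \<delta>"
  proof (rule ccontr)
    assume "\<not> ?thesis"
    hence lt: "\<delta> < H / (1 + M)" using M0 by (simp add: field_simps)
    define \<rho> where "\<rho> = min ((\<delta> + H / (1 + M)) / 2) (min r h / 2)"
    have d\<rho>: "\<delta> < \<rho>" using lt dx unfolding \<rho>_def \<delta>_def by auto
    have \<rho>H: "(1 + M) * \<rho> < H"
    proof -
      have "\<rho> \<le> (\<delta> + H / (1 + M)) / 2" unfolding \<rho>_def by (rule min.cobounded1)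
      moreover have "(\<delta> + H / (1 + M)) / 2 < H / (1 + M)"
        using lt by (rule half_lt)
      ultimately have "\<rho> < H / (1 + M)" by (rule le_less_trans)
      thus ?thesis using M0 by (simp add: field_simps)
    qed
    have "\<rho> \<le> min r h / 2" unfolding \<rho>_def by (rule min.cobounded2)
    hence \<rho>r: "\<rho> \<le> r / 2" "\<rho> \<le> h / 2" by (auto simp: min_def split: if_splits)
    have "ball x \<rho> \<subseteq> \<Omega>"
    proof
      fix y assume "y \<in> ball x \<rho>"
      hence dy: "dist x y < \<rho>" by simp
      have "norm (pr e y - pr e p) \<le> dist (pr e y) (pr e x) + norm (pr e x - pr e p)"
        by (metis dist_norm dist_triangle)
      also have "\<dots> < r" using dist_pr_le[OF e, of y x] dy x(2) \<rho>r by (simp add: dist_commute)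
      finally have c1: "norm (pr e y - pr e p) < r" .
      have "\<bar>y \<bullet> e - p \<bullet> e\<bar> \<le> \<bar>y \<bullet> e - x \<bullet> e\<bar> + \<bar>x \<bullet> e - p \<bullet> e\<bar>" by linarith
      also have "\<dots> < h" using abs_inner_le[OF e, of y x] dy x(3) \<rho>r by (simp add: dist_commute)
      finally have c2: "\<bar>y \<bullet> e - p \<bullet> e\<bar> < h" .
      have py: "pr e y \<in> {y. y \<bullet> e = 0}" "pr e x \<in> {y. y \<bullet> e = 0}" using e pr_orth by auto
      have "dist (\<phi> (pr e y)) (\<phi> (pr e x)) \<le> M * dist (pr e y) (pr e x)"
        by (rule lipschitz_onD[OF L py])
      also have "\<dots> \<le> M * dist x y" using dist_pr_le[OF e, of y x] M0
        by (simp add: dist_commute mult_left_mono)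
      finally have l1: "\<phi> (pr e y) \<le> \<phi> (pr e x) + M * dist x y" by (simp add: dist_real_def)
      have l2: "y \<bullet> e \<ge> x \<bullet> e - dist x y" using abs_inner_le[OF e, of y x] by (simp add: dist_commute)
      have "M * dist x y \<le> M * \<rho>" using dy M0 by (simp add: mult_left_mono)
      hence "y \<bullet> e > \<phi> (pr e y)" using l1 l2 \<rho>H dy unfolding H_def by (simp add: algebra_simps)
      thus "y \<in> \<Omega>" using cyl c1 c2 by blast
    qed
    hence "\<rho> \<le> \<delta>" unfolding \<delta>_def by (rule setdist_frontier_ge[OF op fne])
    thus False using d\<rho> by simp
  qed
  show ?thesis using low up unfolding \<delta>_def H_def by simp
qed



lemma measure_cball_le:
  fixes x0 :: "'a::euclidean_space"
  assumes "\<rho> \<ge> 0"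
  shows "measure lebesgue (cball x0 \<rho>) \<le> (2 * \<rho>) ^ DIM('a)"
proof -
  define B where "B = cbox (x0 - \<rho> *\<^sub>R One) (x0 + \<rho> *\<^sub>R One)"
  have sub: "cball x0 \<rho> \<subseteq> B"
  proof
    fix y assume "y \<in> cball x0 \<rho>"
    hence "norm (y - x0) \<le> \<rho>" by (simp add: dist_norm norm_minus_commute)
    hence "\<bar>(y - x0) \<bullet> i\<bar> \<le> \<rho>" if "i \<in> Basis" for i
      using Basis_le_norm[OF that, of "y - x0"] by linarith
    thus "y \<in> B" unfolding B_def mem_box
      by (auto simp: inner_diff_left inner_add_left abs_le_iff algebra_simps)
  qed
  have "measure lebesgue (cball x0 \<rho>) \<le> measure lebesgue B"
    by (rule measure_mono_fmeasurable[OF sub]) (auto simp: B_def)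
  also have "measure lebesgue B = measure lborel B" by (simp add: B_def measure_completion)
  also have "\<dots> = (\<Prod>i\<in>(Basis::'a set). 2 * \<rho>)"
    unfolding B_def using assms
    by (subst measure_lborel_cbox_eq) (auto simp: inner_diff_left inner_add_left algebra_simps)
  finally show ?thesis by simp
qed

lemma packing:
  fixes U :: "'a::euclidean_space set" and \<phi> :: "'a \<Rightarrow> real"
  assumes U: "compact U" and e: "norm e = 1" and w: "w > 0" and R: "R \<ge> 0"
    and G: "\<And>u. u \<in> U \<Longrightarrow> \<alpha> \<le> u \<bullet> e - \<phi> (pr e u) \<and> u \<bullet> e - \<phi> (pr e u) < \<alpha> + w"
    and sub: "U \<subseteq> cball x0 R"
  shows "measure lebesgue U * (R / w) \<le> (2 * (2 * R + w)) ^ DIM('a)"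
proof -
  have ee: "e \<bullet> e = 1" using e by (simp add: dot_square_norm)
  define N where "N = nat \<lceil>R / w\<rceil>"
  have N1: "R / w \<le> real N" unfolding N_def by linarith
  have N2: "real N * w \<le> R + w"
  proof -
    have "real N < R / w + 1" unfolding N_def using R w by (simp add: of_nat_nat) linarith
    hence "real N * w < (R / w + 1) * w" using w by (simp add: mult_strict_right_mono)
    thus ?thesis using w by (simp add: algebra_simps)
  qed
  define T where "T j = (+) ((real j * w) *\<^sub>R e) ` U" for j :: nat
  have Tc: "compact (T j)" for j unfolding T_def using U by (rule compact_translation)
  have disj: "T i \<inter> T j = {}" if "i \<noteq> j" for i j
  proof (rule ccontr)
    assume "T i \<inter> T j \<noteq> {}"
    then obtain u v where uv: "u \<in> U" "v \<in> U" "(real i * w) *\<^sub>R e + u = (real j * w) *\<^sub>R e + v"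
      unfolding T_def by auto
    have p: "pr e u = pr e v"
    proof -
      have "u = v + (real j * w - real i * w) *\<^sub>R e" using uv(3) by (simp add: algebra_simps)
      thus ?thesis using pr_add[OF e] by metis
    qed
    have "u \<bullet> e = v \<bullet> e + (real j * w - real i * w)"
    proof -
      have "u = v + (real j * w - real i * w) *\<^sub>R e" using uv(3) by (simp add: algebra_simps)
      thus ?thesis by (simp add: inner_add_left ee)
    qed
    hence "\<bar>(real j - real i) * w\<bar> < w" using G[OF uv(1)] G[OF uv(2)] p by (simp add: algebra_simps abs_less_iff)
    hence "\<bar>real j - real i\<bar> < 1" using w by (simp add: abs_mult)
    hence "i = j" by linarith
    thus False using that by simp
  qed
  have "measure lebesgue (\<Union>j\<in>{..<N}. T j) = (\<Sum>j\<in>{..<N}. measure lebesgue (T j))"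
    by (rule measure_negligible_finite_Union_image) (auto simp: pairwise_def disj Tc lmeasurable_compact)
  also have "\<dots> = real N * measure lebesgue U" by (simp add: T_def measure_translation)
  finally have eq: "measure lebesgue (\<Union>j\<in>{..<N}. T j) = real N * measure lebesgue U" .
  have "(\<Union>j\<in>{..<N}. T j) \<subseteq> cball x0 (2 * R + w)"
  proof
    fix y assume "y \<in> (\<Union>j\<in>{..<N}. T j)"
    then obtain j where j: "j \<in> {..<N}" and y: "y \<in> T j" by blast
    then obtain u where u: "u \<in> U" "y = (real j * w) *\<^sub>R e + u" unfolding T_def by auto
    have "dist x0 y \<le> dist x0 u + norm ((real j * w) *\<^sub>R e)"
      using u(2) by (metis add.commute dist_norm dist_triangle_le norm_triangle_ineq4 diff_add_eq_diff_diff_swap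
          order_refl dist_add_cancel2 add_diff_cancel_left' norm_minus_commute)
    also have "norm ((real j * w) *\<^sub>R e) \<le> real N * w" using j w e by simp
    finally have "dist x0 y \<le> dist x0 u + real N * w" by simp
    moreover have "dist x0 u \<le> R" using sub u(1) by auto
    ultimately show "y \<in> cball x0 (2 * R + w)" using N2 by simp
  qed
  hence "measure lebesgue (\<Union>j\<in>{..<N}. T j) \<le> measure lebesgue (cball x0 (2 * R + w))"
    by (intro measure_mono_fmeasurable) (auto intro!: fmeasurableD lmeasurable_compact compact_UN Tc)
  also have "\<dots> \<le> (2 * (2 * R + w)) ^ DIM('a)" using R w by (intro measure_cball_le) simp
  finally have "real N * measure lebesgue U \<le> (2 * (2 * R + w)) ^ DIM('a)" using eq by simp
  moreover have "measure lebesgue U * (R / w) \<le> measure lebesgue U * real N"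
    using N1 by (intro mult_left_mono) auto
  ultimately show ?thesis by (simp add: mult.commute)
qed



locale wsetup =
  fixes \<Omega> :: "'a::euclidean_space set" and W :: "'a set set" and CW :: real
  assumes op: "open \<Omega>" and bd: "bounded \<Omega>" and fne: "frontier \<Omega> \<noteq> {}"
    and dy: "\<forall>Q\<in>W. dyadic_cube Q"
    and dis: "\<forall>Q\<in>W. \<forall>S\<in>W. Q \<noteq> S \<longrightarrow> interior Q \<inter> interior S = {}"
    and un: "\<Union>W = \<Omega>"
    and CW: "CW > 0"
    and wh: "\<forall>Q\<in>W. CW * sidelen Q \<le> setdist Q (frontier \<Omega>) \<and> setdist Q (frontier \<Omega>) \<le> 4 * CW * sidelen Q"
begin

definition "C1 = 4 * CW + real DIM('a)"

lemma cube: "S \<in> W \<Longrightarrow> \<exists>m k. S = dyad m k"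
  using dy by (auto simp: dyadic_cube_def)

lemma sl_pos: "S \<in> W \<Longrightarrow> 0 < sidelen S"
  using cube[of S] by (auto simp: sidelen_dyad)

lemma S_compact: "S \<in> W \<Longrightarrow> compact S"
  using cube dyad_compact by blast

lemma S_ne: "S \<in> W \<Longrightarrow> S \<noteq> {}"
  using cube dyad_ne by blast

lemma S_sub: "S \<in> W \<Longrightarrow> S \<subseteq> \<Omega>"
  using un by blast

lemma S_meas: "S \<in> W \<Longrightarrow> measure lebesgue S = sidelen S ^ DIM('a)"
  using cube measure_dyad by blast

lemma S_diam: "S \<in> W \<Longrightarrow> x \<in> S \<Longrightarrow> y \<in> S \<Longrightarrow> dist x y \<le> real DIM('a) * sidelen S"
  using cube dyad_diam by blast

lemma S_negl: "S \<in> W \<Longrightarrow> S' \<in> W \<Longrightarrow> S \<noteq> S' \<Longrightarrow> negligible (S \<inter> S')"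
  using cube dis negligible_dyad_inter by metis

lemma C1_pos: "C1 > 0" using CW by (simp add: C1_def)

lemma delta_bounds:
  assumes S: "S \<in> W" and x: "x \<in> S"
  shows "CW * sidelen S \<le> setdist {x} (frontier \<Omega>) \<and> setdist {x} (frontier \<Omega>) \<le> C1 * sidelen S"
proof
  have "setdist S (frontier \<Omega>) \<le> setdist {x} (frontier \<Omega>)"
    by (rule setdist_subset_left) (use x in auto)
  thus "CW * sidelen S \<le> setdist {x} (frontier \<Omega>)" using wh S by fastforce
next
  obtain y z where yz: "y \<in> S" "z \<in> frontier \<Omega>" "dist y z = setdist S (frontier \<Omega>)"
    using setdist_compact_closed[OF S_compact[OF S] frontier_closed S_ne[OF S] fne] by blast
  have "setdist {x} (frontier \<Omega>) \<le> dist x z" by (rule setdist_le_dist) (use yz in auto)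
  also have "\<dots> \<le> dist x y + dist y z" by (rule dist_triangle)
  also have "\<dots> \<le> real DIM('a) * sidelen S + 4 * CW * sidelen S"
    using S_diam[OF S x yz(1)] yz(3) wh S by fastforce
  finally show "setdist {x} (frontier \<Omega>) \<le> C1 * sidelen S" by (simp add: C1_def algebra_simps)
qed

lemma measure_UnionW:
  assumes "finite F" "F \<subseteq> W"
  shows "measure lebesgue (\<Union>F) = (\<Sum>S\<in>F. sidelen S ^ DIM('a))"
proof -
  have "measure lebesgue (\<Union>S\<in>F. S) = (\<Sum>S\<in>F. measure lebesgue S)"
    by (rule measure_negligible_finite_Union_image)
       (use assms in \<open>auto simp: pairwise_def intro!: lmeasurable_compact S_compact S_negl\<close>)
  thus ?thesis using assms S_meas by (simp add: subset_iff)
qed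

lemma chart_count:
  fixes \<phi> :: "'a \<Rightarrow> real"
  assumes e: "norm e = 1" and r: "r > 0" and h: "h > 0"
    and L: "M-lipschitz_on {y. y \<bullet> e = 0} \<phi>"
    and gr: "\<forall>y. y \<bullet> e = 0 \<longrightarrow> norm (y - pr e p) < r \<longrightarrow> \<bar>\<phi> y - p \<bullet> e\<bar> < h / 2"
    and cyl: "\<forall>x. norm (pr e x - pr e p) < r \<longrightarrow> \<bar>x \<bullet> e - p \<bullet> e\<bar> < h \<longrightarrow> (x \<in> \<Omega> \<longleftrightarrow> x \<bullet> e > \<phi> (pr e x))"
    and s: "s > 0" "s \<le> R" "C1 * s < min r h / 2"
    and F: "finite F" "F \<subseteq> W"
    and FS: "\<And>S. S \<in> F \<Longrightarrow> sidelen S = s \<and> S \<subseteq> cball x0 R \<and>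
              (\<forall>x\<in>S. norm (pr e x - pr e p) < r / 2 \<and> \<bar>x \<bullet> e - p \<bullet> e\<bar> < h / 2)"
  shows "real (card F) * s ^ (DIM('a) - 1) \<le> (1 + M) * C1 * (2 * (2 + (1 + M) * C1)) ^ DIM('a) * R ^ (DIM('a) - 1)"
proof -
  have M0: "0 \<le> M" using L lipschitz_on_nonneg by blast
  define w where "w = (1 + M) * C1 * s"
  have w: "w > 0" using M0 C1_pos s by (simp add: w_def)
  define U where "U = \<Union>F"
  have Uc: "compact U" unfolding U_def using F S_compact by blast
  have G: "CW * s \<le> u \<bullet> e - \<phi> (pr e u) \<and> u \<bullet> e - \<phi> (pr e u) < CW * s + w" if u: "u \<in> U" for u
  proof -
    obtain S where S: "S \<in> F" "u \<in> S" using u U_def by blast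
    have SW: "S \<in> W" using S F by blast
    have db: "CW * s \<le> setdist {u} (frontier \<Omega>)" "setdist {u} (frontier \<Omega>) \<le> C1 * s"
      using delta_bounds[OF SW S(2)] FS[OF S(1)] by auto
    have uO: "u \<in> \<Omega>" using S_sub[OF SW] S(2) by blast
    have "setdist {u} (frontier \<Omega>) \<le> u \<bullet> e - \<phi> (pr e u) \<and>
         u \<bullet> e - \<phi> (pr e u) \<le> (1 + M) * setdist {u} (frontier \<Omega>)"
      by (rule chart_H[OF op fne e r h L gr cyl uO]) (use FS[OF S(1)] S(2) db s in auto)
    moreover have "(1 + M) * setdist {u} (frontier \<Omega>) \<le> (1 + M) * (C1 * s)"
      using db M0 by (intro mult_left_mono) auto
    moreover have "0 < CW * s" using CW s by simp
    ultimately show ?thesis using db unfolding w_def by (simp add: algebra_simps)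
  qed
  have Usub: "U \<subseteq> cball x0 R" unfolding U_def using FS by blast
  have pk: "measure lebesgue U * (R / w) \<le> (2 * (2 * R + w)) ^ DIM('a)"
    by (rule packing[OF Uc e w _ G Usub]) (use s in auto)
  have mU: "measure lebesgue U = real (card F) * s ^ DIM('a)"
    using measure_UnionW[OF F] FS unfolding U_def by simp
  have "(1 + M) * C1 * s \<le> (1 + M) * C1 * R"
    using s M0 C1_pos by (intro mult_left_mono) auto
  hence "2 * (2 * R + w) \<le> 2 * (2 + (1 + M) * C1) * R"
    unfolding w_def by (simp add: algebra_simps)
  hence "(2 * (2 * R + w)) ^ DIM('a) \<le> (2 * (2 + (1 + M) * C1) * R) ^ DIM('a)"
    using w s by (intro power_mono) auto
  with pk mU have key: "real (card F) * s ^ DIM('a) * (R / w) \<le> (2 * (2 + (1 + M) * C1)) ^ DIM('a) * R ^ DIM('a)"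
    by (simp add: power_mult_distrib)
  have d1: "DIM('a) = Suc (DIM('a) - 1)" using DIM_positive[where 'a='a] by linarith
  define K where "K = (2 * (2 + (1 + M) * C1)) ^ DIM('a)"
  have "real (card F) * s ^ DIM('a) * (R / w) = real (card F) * s ^ (DIM('a) - 1) * R / ((1 + M) * C1)"
  proof -
    have sd: "s ^ DIM('a) = s * s ^ (DIM('a) - 1)" by (metis d1 power_Suc)
    have X: "(1 + M) * C1 \<noteq> 0" using M0 C1_pos by (simp add: add_pos_nonneg)
    have aux: "\<And>c t X. s \<noteq> 0 \<Longrightarrow> X \<noteq> 0 \<Longrightarrow> c * (s * t) * (R / (X * s)) = c * t * R / X"
      by (simp add: field_simps)
    show ?thesis unfolding sd w_def using aux[of "(1 + M) * C1"] X s by simp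
  qed
  also have "R ^ DIM('a) = R * R ^ (DIM('a) - 1)" by (metis d1 power_Suc)
  ultimately have "real (card F) * s ^ (DIM('a) - 1) * R / ((1 + M) * C1) \<le> K * (R * R ^ (DIM('a) - 1))"
    using key K_def by simp
  moreover have "(1 + M) * C1 > 0" using M0 C1_pos by (simp add: add_pos_nonneg)
  ultimately have "real (card F) * s ^ (DIM('a) - 1) * R \<le> K * (R * R ^ (DIM('a) - 1)) * ((1 + M) * C1)"
    by (simp add: pos_divide_le_eq)
  hence "real (card F) * s ^ (DIM('a) - 1) * R \<le> (1 + M) * C1 * K * R ^ (DIM('a) - 1) * R"
    by (simp add: ac_simps)
  hence "real (card F) * s ^ (DIM('a) - 1) \<le> (1 + M) * C1 * K * R ^ (DIM('a) - 1)"
    using s by (simp add: mult_le_cancel_right)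
  thus ?thesis by (simp add: K_def)
qed

end



definition chartP :: "'a::euclidean_space set \<Rightarrow> 'a \<Rightarrow> 'a \<Rightarrow> real \<Rightarrow> real \<Rightarrow> ('a \<Rightarrow> real) \<Rightarrow> real \<Rightarrow> bool" where
  "chartP \<Omega> p e r h \<phi> M \<longleftrightarrow> norm e = 1 \<and> r > 0 \<and> h > 0 \<and>
        M-lipschitz_on {y. y \<bullet> e = 0} \<phi> \<and>
        (\<forall>y. y \<bullet> e = 0 \<longrightarrow> norm (y - pr e p) < r \<longrightarrow> \<bar>\<phi> y - p \<bullet> e\<bar> < h / 2) \<and>
        (\<forall>x. norm (pr e x - pr e p) < r \<longrightarrow> \<bar>x \<bullet> e - p \<bullet> e\<bar> < h \<longrightarrow> (x \<in> \<Omega> \<longleftrightarrow> x \<bullet> e > \<phi> (pr e x)))"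

context wsetup
begin

definition "C2 = C1 + real DIM('a)"

lemma near_frontier:
  assumes S: "S \<in> W"
  obtains z where "z \<in> frontier \<Omega>" "\<And>x. x \<in> S \<Longrightarrow> dist x z \<le> C2 * sidelen S"
proof -
  obtain y where y: "y \<in> S" using S_ne[OF S] by blast
  obtain y' z where yz: "y' \<in> {y}" "z \<in> frontier \<Omega>" "dist y' z = setdist {y} (frontier \<Omega>)"
    using setdist_compact_closed[of "{y}" "frontier \<Omega>"] fne by auto
  have dz: "dist y z \<le> C1 * sidelen S" using yz delta_bounds[OF S y] by auto
  have "dist x z \<le> C2 * sidelen S" if x: "x \<in> S" for x
  proof -
    have "dist x z \<le> dist x y + dist y z" by (rule dist_triangle)
    also have "\<dots> \<le> real DIM('a) * sidelen S + C1 * sidelen S" using S_diam[OF S x y] dz by linarith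
    finally show ?thesis by (simp add: C2_def algebra_simps)
  qed
  thus ?thesis using that yz(2) by blast
qed

lemma global_count:
  assumes ch: "\<forall>p\<in>frontier \<Omega>. \<exists>e r h \<phi> M. chartP \<Omega> p e r h \<phi> M"
  shows "\<exists>s0>0. \<exists>K\<ge>0. \<forall>s R x0 F. 0 < s \<longrightarrow> s \<le> s0 \<longrightarrow> s \<le> R \<longrightarrow> finite F \<longrightarrow> F \<subseteq> W \<longrightarrow>
           (\<forall>S\<in>F. sidelen S = s \<and> S \<subseteq> cball x0 R) \<longrightarrow>
           real (card F) * s ^ (DIM('a) - 1) \<le> K * R ^ (DIM('a) - 1)"
proof -
  have "\<forall>p\<in>frontier \<Omega>. \<exists>c. chartP \<Omega> p (fst c) (fst (snd c)) (fst (snd (snd c)))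
             (fst (snd (snd (snd c)))) (snd (snd (snd (snd c))))"
  proof
    fix p assume "p \<in> frontier \<Omega>"
    then obtain e r h \<phi> M where "chartP \<Omega> p e r h \<phi> M" using ch by blast
    thus "\<exists>c. chartP \<Omega> p (fst c) (fst (snd c)) (fst (snd (snd c)))
             (fst (snd (snd (snd c)))) (snd (snd (snd (snd c))))"
      by (intro exI[of _ "(e, r, h, \<phi>, M)"]) simp
  qed
  then obtain c where c: "\<forall>p\<in>frontier \<Omega>. chartP \<Omega> p (fst (c p)) (fst (snd (c p))) (fst (snd (snd (c p))))
             (fst (snd (snd (snd (c p))))) (snd (snd (snd (snd (c p)))))"
    by (rule bchoice[elim_format]) blast
  define e where "e p = fst (c p)" for p
  define r where "r p = fst (snd (c p))" for p
  define h where "h p = fst (snd (snd (c p)))" for p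
  define \<phi> where "\<phi> p = fst (snd (snd (snd (c p))))" for p
  define M where "M p = snd (snd (snd (snd (c p))))" for p
  have cp: "chartP \<Omega> p (e p) (r p) (h p) (\<phi> p) (M p)" if "p \<in> frontier \<Omega>" for p
    using c that by (simp add: e_def r_def h_def \<phi>_def M_def)
  define V where "V p = {x. norm (pr (e p) x - pr (e p) p) < r p / 4 \<and> \<bar>x \<bullet> e p - p \<bullet> e p\<bar> < h p / 4}" for p
  have Vo: "open (V p)" for p
    unfolding V_def pr_def by (intro open_Collect_conj open_Collect_less continuous_intros)
  have cov: "frontier \<Omega> \<subseteq> (\<Union>p\<in>frontier \<Omega>. V p)"
  proof
    fix p assume p: "p \<in> frontier \<Omega>"
    hence "p \<in> V p" using cp[OF p] by (simp add: V_def chartP_def)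
    thus "p \<in> (\<Union>p\<in>frontier \<Omega>. V p)" using p by blast
  qed
  have "compact (frontier \<Omega>)" using bd by (rule compact_frontier_bounded)
  then obtain P where P: "P \<subseteq> frontier \<Omega>" "finite P" "frontier \<Omega> \<subseteq> (\<Union>p\<in>P. V p)"
    by (rule compactE_image[OF _ Vo cov])
  have Pne: "P \<noteq> {}" using P(3) fne by blast
  have C2pos: "C2 > 0" using C1_pos by (simp add: C2_def)
  define s0 where "s0 = Min ((\<lambda>p. min (r p) (h p) / (4 * C2)) ` P)"
  have rh: "r p > 0 \<and> h p > 0" if "p \<in> P" for p
  proof -
    have "p \<in> frontier \<Omega>" using that P by blast
    from cp[OF this] show ?thesis unfolding chartP_def by blast
  qed
  have s0pos: "s0 > 0" unfolding s0_def using P(2) Pne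
  proof (subst Min_gr_iff)
    show "\<forall>a\<in>(\<lambda>p. min (r p) (h p) / (4 * C2)) ` P. 0 < a" using rh C2pos by auto
  qed auto
  have s0le: "C2 * s \<le> min (r p) (h p) / 4" if "p \<in> P" "s \<le> s0" "s > 0" for p s
  proof -
    have "s0 \<le> min (r p) (h p) / (4 * C2)" unfolding s0_def using P that by (intro Min_le) auto
    hence "s \<le> min (r p) (h p) / (4 * C2)" using that by linarith
    thus ?thesis using C2pos by (simp add: field_simps)
  qed
  define Kp where "Kp p = (1 + M p) * C1 * (2 * (2 + (1 + M p) * C1)) ^ DIM('a)" for p
  define K where "K = (\<Sum>p\<in>P. Kp p)"
  have Kp0: "Kp p \<ge> 0" if "p \<in> P" for p
  proof -
    have "p \<in> frontier \<Omega>" using that P by blast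
    hence "(M p)-lipschitz_on {y. y \<bullet> e p = 0} (\<phi> p)" using cp by (simp add: chartP_def)
    hence "M p \<ge> 0" by (rule lipschitz_on_nonneg)
    thus ?thesis using C1_pos unfolding Kp_def by simp
  qed
  have K0: "K \<ge> 0" unfolding K_def using Kp0 by (simp add: sum_nonneg)
  have main: "real (card F) * s ^ (DIM('a) - 1) \<le> K * R ^ (DIM('a) - 1)"
    if s: "0 < s" "s \<le> s0" "s \<le> R" and F: "finite F" "F \<subseteq> W" and FS: "\<forall>S\<in>F. sidelen S = s \<and> S \<subseteq> cball x0 R"
    for s R x0 F
  proof -
    define G where "G p = {S\<in>F. \<forall>x\<in>S. norm (pr (e p) x - pr (e p) p) < r p / 2 \<and> \<bar>x \<bullet> e p - p \<bullet> e p\<bar> < h p / 2}" for p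
    have FG: "F \<subseteq> (\<Union>p\<in>P. G p)"
    proof
      fix S assume S: "S \<in> F"
      hence SW: "S \<in> W" using F by blast
      obtain z where z: "z \<in> frontier \<Omega>" "\<And>x. x \<in> S \<Longrightarrow> dist x z \<le> C2 * sidelen S"
        by (rule near_frontier[OF SW]) blast
      obtain p where p: "p \<in> P" "z \<in> V p" using P(3) z(1) by blast
      have pf: "p \<in> frontier \<Omega>" using p P by blast
      have ep: "norm (e p) = 1" using cp[OF pf] by (simp add: chartP_def)
      have sl: "sidelen S = s" using FS S by blast
      have C2s: "C2 * s \<le> r p / 4" "C2 * s \<le> h p / 4" using s0le[OF p(1) s(2) s(1)] by auto
      have "\<forall>x\<in>S. norm (pr (e p) x - pr (e p) p) < r p / 2 \<and> \<bar>x \<bullet> e p - p \<bullet> e p\<bar> < h p / 2"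
      proof
        fix x assume x: "x \<in> S"
        have dxz: "dist x z \<le> C2 * s" using z(2)[OF x] sl by simp
        have "norm (pr (e p) x - pr (e p) p) \<le> dist (pr (e p) x) (pr (e p) z) + norm (pr (e p) z - pr (e p) p)"
          by (metis dist_norm dist_triangle)
        also have "\<dots> < r p / 2" using dist_pr_le[OF ep, of x z] dxz C2s p(2) by (simp add: V_def)
        finally have 1: "norm (pr (e p) x - pr (e p) p) < r p / 2" .
        have "\<bar>x \<bullet> e p - p \<bullet> e p\<bar> \<le> \<bar>x \<bullet> e p - z \<bullet> e p\<bar> + \<bar>z \<bullet> e p - p \<bullet> e p\<bar>" by linarith
        also have "\<dots> < h p / 2" using abs_inner_le[OF ep, of x z] dxz C2s p(2) by (simp add: V_def)
        finally show "norm (pr (e p) x - pr (e p) p) < r p / 2 \<and> \<bar>x \<bullet> e p - p \<bullet> e p\<bar> < h p / 2"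
          using 1 by simp
      qed
      thus "S \<in> (\<Union>p\<in>P. G p)" using p(1) S by (auto simp: G_def)
    qed
    have "card F \<le> card (\<Union>p\<in>P. G p)"
    proof (rule card_mono[OF _ FG])
      have "(\<Union>p\<in>P. G p) \<subseteq> F" by (auto simp: G_def)
      thus "finite (\<Union>p\<in>P. G p)" using F(1) finite_subset by blast
    qed
    also have "\<dots> \<le> (\<Sum>p\<in>P. card (G p))" by (rule card_UN_le[OF P(2)])
    finally have cF: "real (card F) \<le> (\<Sum>p\<in>P. real (card (G p)))" by (simp flip: of_nat_sum)
    have cG: "real (card (G p)) * s ^ (DIM('a) - 1) \<le> Kp p * R ^ (DIM('a) - 1)" if p: "p \<in> P" for p
    proof -
      have pf: "p \<in> frontier \<Omega>" using p P by blast
      have C: "chartP \<Omega> p (e p) (r p) (h p) (\<phi> p) (M p)" by (rule cp[OF pf])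
      have C1s: "C1 * s < min (r p) (h p) / 2"
      proof -
        have "C1 * s \<le> C2 * s" using s by (simp add: C2_def)
        moreover have "min (r p) (h p) > 0" using C by (simp add: chartP_def)
        ultimately show ?thesis using s0le[OF p s(2) s(1)] by linarith
      qed
      have C': "norm (e p) = 1" "r p > 0" "h p > 0" "(M p)-lipschitz_on {y. y \<bullet> e p = 0} (\<phi> p)"
        "\<forall>y. y \<bullet> e p = 0 \<longrightarrow> norm (y - pr (e p) p) < r p \<longrightarrow> \<bar>\<phi> p y - p \<bullet> e p\<bar> < h p / 2"
        "\<forall>x. norm (pr (e p) x - pr (e p) p) < r p \<longrightarrow> \<bar>x \<bullet> e p - p \<bullet> e p\<bar> < h p \<longrightarrow> (x \<in> \<Omega> \<longleftrightarrow> x \<bullet> e p > \<phi> p (pr (e p) x))"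
        using C unfolding chartP_def by blast+
      have GF: "G p \<subseteq> F" by (auto simp: G_def)
      have fG: "finite (G p)" using F(1) GF finite_subset by blast
      have GW: "G p \<subseteq> W" using F(2) GF by blast
      have GS: "sidelen S = s \<and> S \<subseteq> cball x0 R \<and>
              (\<forall>x\<in>S. norm (pr (e p) x - pr (e p) p) < r p / 2 \<and> \<bar>x \<bullet> e p - p \<bullet> e p\<bar> < h p / 2)"
        if "S \<in> G p" for S
        using that FS GF unfolding G_def by blast
      show ?thesis unfolding Kp_def
        by (rule chart_count[OF C'(1-6) s(1) s(3) C1s fG GW GS])
    qed
    have "real (card F) * s ^ (DIM('a) - 1) \<le> (\<Sum>p\<in>P. real (card (G p))) * s ^ (DIM('a) - 1)"
      using cF s by (intro mult_right_mono) auto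
    also have "\<dots> = (\<Sum>p\<in>P. real (card (G p)) * s ^ (DIM('a) - 1))" by (simp add: sum_distrib_right)
    also have "\<dots> \<le> (\<Sum>p\<in>P. Kp p * R ^ (DIM('a) - 1))" by (rule sum_mono) (rule cG)
    also have "\<dots> = K * R ^ (DIM('a) - 1)" by (simp add: K_def sum_distrib_right)
    finally show ?thesis .
  qed
  show ?thesis
    by (rule exI[of _ s0], rule conjI[OF s0pos], rule exI[of _ K], rule conjI[OF K0]) (intro allI impI main)
qed

end



lemma geom_finite_le:
  fixes q :: real
  assumes q: "0 \<le> q" "q < 1" and N: "finite N"
  shows "(\<Sum>n\<in>N. q ^ n) \<le> 1 / (1 - q)"
proof -
  obtain k where k: "N \<subseteq> {..<k}" using N by (meson finite_nat_bounded)
  have "(\<Sum>n\<in>N. q ^ n) \<le> (\<Sum>n<k. q ^ n)"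
    by (rule sum_mono2) (use k q in auto)
  also have "\<dots> = (1 - q ^ k) / (1 - q)" using q by (simp add: sum_gp_strict)
  also have "\<dots> \<le> 1 / (1 - q)" using q by (intro divide_right_mono) auto
  finally show ?thesis .
qed

lemma dyadic_sum:
  fixes M :: "int set" and \<gamma> t :: real
  assumes M: "finite M" and g: "\<gamma> > 0" and t: "t > 0"
    and Mt: "\<And>m. m \<in> M \<Longrightarrow> 2 powr (- real_of_int m) \<le> t"
  shows "(\<Sum>m\<in>M. (2 powr (- real_of_int m)) powr \<gamma>) \<le> t powr \<gamma> / (1 - 2 powr (- \<gamma>))"
proof -
  define m0 where "m0 = \<lceil>- log 2 t\<rceil>"
  define q where "q = (2::real) powr (- \<gamma>)"
  have q: "0 \<le> q" "q < 1" using g by (auto simp: q_def powr_less_one)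
  have mm0: "m0 \<le> m" if "m \<in> M" for m
  proof -
    have "log 2 (2 powr (- real_of_int m)) \<le> log 2 t"
      using Mt[OF that] t by (subst log_le_cancel_iff) auto
    hence "- log 2 t \<le> real_of_int m" by simp
    thus ?thesis unfolding m0_def by (simp add: ceiling_le_iff)
  qed
  have t0: "(2::real) powr (- real_of_int m0) \<le> t"
  proof -
    have "- real_of_int m0 \<le> log 2 t" unfolding m0_def by linarith
    hence "(2::real) powr (- real_of_int m0) \<le> 2 powr (log 2 t)" by simp
    thus ?thesis using t by simp
  qed
  have tm: "(2 powr (- real_of_int m)) powr \<gamma> \<le> t powr \<gamma> * q ^ nat (m - m0)" if "m \<in> M" for m
  proof -
    have "(2 powr (- real_of_int m)) powr \<gamma> = (2 powr (- real_of_int m0)) powr \<gamma> * q ^ nat (m - m0)"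
    proof -
      have "real (nat (m - m0)) = real_of_int m - real_of_int m0" using mm0[OF that] by simp
      have "q ^ nat (m - m0) = q powr real (nat (m - m0))"
        by (simp add: q_def powr_realpow)
      also have "\<dots> = 2 powr (- \<gamma> * (real_of_int m - real_of_int m0))"
        unfolding q_def powr_powr by (simp add: \<open>real (nat (m - m0)) = _\<close>)
      finally have "q ^ nat (m - m0) = 2 powr (- \<gamma> * (real_of_int m - real_of_int m0))" .
      thus ?thesis by (simp add: powr_powr flip: powr_add) (simp add: algebra_simps)
    qed
    also have "\<dots> \<le> t powr \<gamma> * q ^ nat (m - m0)"
      using t0 g q by (intro mult_right_mono powr_mono2) auto
    finally show ?thesis .
  qed
  have "(\<Sum>m\<in>M. (2 powr (- real_of_int m)) powr \<gamma>) \<le> (\<Sum>m\<in>M. t powr \<gamma> * q ^ nat (m - m0))"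
    by (rule sum_mono) (rule tm)
  also have "\<dots> = t powr \<gamma> * (\<Sum>m\<in>M. q ^ nat (m - m0))" by (simp add: sum_distrib_left)
  also have "(\<Sum>m\<in>M. q ^ nat (m - m0)) = (\<Sum>n\<in>(\<lambda>m. nat (m - m0)) ` M. q ^ n)"
  proof (rule sum.reindex[symmetric, unfolded comp_def])
    show "inj_on (\<lambda>m. nat (m - m0)) M" proof (rule inj_onI)
      fix x y assume "x \<in> M" "y \<in> M" "nat (x - m0) = nat (y - m0)"
      thus "x = y" using mm0[of x] mm0[of y] by simp
    qed
  qed
  also have "t powr \<gamma> * (\<Sum>n\<in>(\<lambda>m. nat (m - m0)) ` M. q ^ n) \<le> t powr \<gamma> * (1 / (1 - q))"
    by (intro mult_left_mono geom_finite_le q) (use M in auto)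
  finally show ?thesis by (simp add: q_def)
qed



context wsetup
begin

definition "mS S = (SOME m. \<exists>k. S = dyad m k)"

lemma sl_m: assumes "S \<in> W" shows "sidelen S = 2 powr (- real_of_int (mS S))"
proof -
  have "\<exists>m k. S = dyad m k" using cube[OF assms] .
  hence "\<exists>k. S = dyad (mS S) k" unfolding mS_def by (rule someI_ex)
  then obtain k where "S = dyad (mS S) k" by blast
  hence "sidelen S = sidelen (dyad (mS S) k)" by (rule arg_cong)
  thus ?thesis by (simp only: sidelen_dyad)
qed

lemma big_count:
  assumes s0: "s0 > 0"
  shows "\<exists>K0\<ge>0. \<forall>F. finite F \<longrightarrow> F \<subseteq> W \<longrightarrow> (\<forall>S\<in>F. s0 < sidelen S) \<longrightarrow> real (card F) \<le> K0"
proof -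
  obtain B c where B: "\<Omega> \<subseteq> cball c B" and B0: "B \<ge> 0"
    using bd unfolding bounded_subset_cball by blast
  define K0 where "K0 = (2 * B) ^ DIM('a) / s0 ^ DIM('a)"
  have "real (card F) \<le> K0" if F: "finite F" "F \<subseteq> W" "\<forall>S\<in>F. s0 < sidelen S" for F
  proof -
    have "real (card F) * s0 ^ DIM('a) = (\<Sum>S\<in>F. s0 ^ DIM('a))" by simp
    also have "\<dots> \<le> (\<Sum>S\<in>F. sidelen S ^ DIM('a))"
      using F s0 by (intro sum_mono power_mono) auto
    also have "\<dots> = measure lebesgue (\<Union>F)" using measure_UnionW[OF F(1,2)] by simp
    also have "\<dots> \<le> measure lebesgue (cball c B)"
    proof (rule measure_mono_fmeasurable)
      have "\<Union>F \<subseteq> \<Omega>" using F(2) S_sub by blast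
      thus "\<Union>F \<subseteq> cball c B" using B by (rule subset_trans)
      have "compact (\<Union>F)" using F(1) by (rule compact_Union) (use F(2) S_compact in blast)
      thus "\<Union>F \<in> sets lebesgue" by (intro fmeasurableD lmeasurable_compact)
    qed auto
    also have "\<dots> \<le> (2 * B) ^ DIM('a)" by (rule measure_cball_le[OF B0])
    finally show ?thesis unfolding K0_def using s0 by (simp add: field_simps)
  qed
  moreover have "K0 \<ge> 0" unfolding K0_def using B0 s0 by simp
  ultimately show ?thesis by (intro exI[of _ K0] conjI allI impI) auto
qed

end



lemma powr_split:
  fixes x :: real
  assumes "x > 0"
  shows "x powr a = x ^ n * x powr (a - real n)"
proof -
  have "x powr a = x powr (real n + (a - real n))" by simp
  also have "\<dots> = x powr real n * x powr (a - real n)" by (rule powr_add)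
  finally show ?thesis using assms by (simp add: powr_realpow)
qed

context wsetup
begin

lemma Gbound:
  assumes ch: "\<forall>p\<in>frontier \<Omega>. \<exists>e r h \<phi> M. chartP \<Omega> p e r h \<phi> M"
    and a: "real DIM('a) - 1 < a" and A: "A \<ge> 1"
  shows "\<exists>CG\<ge>0. \<forall>t x0 F. 0 < t \<longrightarrow> finite F \<longrightarrow> F \<subseteq> W \<longrightarrow>
           (\<forall>S\<in>F. sidelen S \<le> t \<and> S \<subseteq> cball x0 (A * t)) \<longrightarrow>
           (\<Sum>S\<in>F. sidelen S powr a) \<le> CG * t powr a"
proof -
  obtain s0 K where s0: "s0 > 0" and K: "K \<ge> 0" and gc: "\<forall>s R x0 F. 0 < s \<longrightarrow> s \<le> s0 \<longrightarrow> s \<le> R \<longrightarrow> finite F \<longrightarrow> F \<subseteq> W \<longrightarrow>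
           (\<forall>S\<in>F. sidelen S = s \<and> S \<subseteq> cball x0 R) \<longrightarrow>
           real (card F) * s ^ (DIM('a) - 1) \<le> K * R ^ (DIM('a) - 1)"
    using global_count[OF ch] by (elim exE conjE) (rule that; assumption)
  obtain K0 where K0: "K0 \<ge> 0" and bc: "\<forall>F. finite F \<longrightarrow> F \<subseteq> W \<longrightarrow> (\<forall>S\<in>F. s0 < sidelen S) \<longrightarrow> real (card F) \<le> K0"
    using big_count[OF s0] by (elim exE conjE) (rule that; assumption)
  define n where "n = DIM('a) - 1"
  have rn: "real n = real DIM('a) - 1" unfolding n_def using DIM_positive[where 'a='a] by (simp add: of_nat_diff)
  define \<gamma> where "\<gamma> = a - real n"
  have g: "\<gamma> > 0" using a rn by (simp add: \<gamma>_def)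
  have a0: "a > 0" using a DIM_positive[where 'a='a] by linarith
  define q where "q = (2::real) powr (- \<gamma>)"
  have q: "q < 1" using g by (simp add: q_def powr_less_one)
  define CG where "CG = K0 + K * A ^ n / (1 - q)"
  have CG0: "CG \<ge> 0" unfolding CG_def using K0 K A q by simp
  have main: "(\<Sum>S\<in>F. sidelen S powr a) \<le> CG * t powr a"
    if t: "0 < t" and F: "finite F" "F \<subseteq> W" and FS: "\<forall>S\<in>F. sidelen S \<le> t \<and> S \<subseteq> cball x0 (A * t)"
    for t x0 F
  proof -
    define P where "P = {S :: 'a set. s0 < sidelen S}"
    have split: "(\<Sum>S\<in>F. sidelen S powr a) = (\<Sum>S\<in>F \<inter> P. sidelen S powr a) + (\<Sum>S\<in>F - P. sidelen S powr a)"
      by (rule sum.Int_Diff[OF F(1)])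
    have big: "(\<Sum>S\<in>F \<inter> P. sidelen S powr a) \<le> K0 * t powr a"
    proof -
      have "(\<Sum>S\<in>F \<inter> P. sidelen S powr a) \<le> (\<Sum>S\<in>F \<inter> P. t powr a)"
      proof (rule sum_mono)
        fix S assume S: "S \<in> F \<inter> P"
        hence "0 \<le> sidelen S" "sidelen S \<le> t" using FS F sl_pos[of S] by auto
        thus "sidelen S powr a \<le> t powr a" using a0 by (intro powr_mono2) auto
      qed
      also have "\<dots> = real (card (F \<inter> P)) * t powr a" by simp
      also have "\<dots> \<le> K0 * t powr a"
      proof (rule mult_right_mono)
        have "finite (F \<inter> P)" "F \<inter> P \<subseteq> W" "\<forall>S\<in>F \<inter> P. s0 < sidelen S" using F by (auto simp: P_def)
        thus "real (card (F \<inter> P)) \<le> K0" using bc by blast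
      qed simp
      finally show ?thesis .
    qed
    define Fs where "Fs = F - P"
    have Fs: "finite Fs" "Fs \<subseteq> W" using F by (auto simp: Fs_def)
    define M where "M = mS ` Fs"
    have "(\<Sum>S\<in>Fs. sidelen S powr a) = (\<Sum>m\<in>M. \<Sum>S\<in>{S. S \<in> Fs \<and> mS S = m}. sidelen S powr a)"
      by (rule sum.group[symmetric]) (use Fs in \<open>auto simp: M_def\<close>)
    also have "\<dots> \<le> (\<Sum>m\<in>M. K * (A * t) ^ n * (2 powr (- real_of_int m)) powr \<gamma>)"
    proof (rule sum_mono)
      fix m assume m: "m \<in> M"
      define \<sigma> where "\<sigma> = (2::real) powr (- real_of_int m)"
      define Fm where "Fm = {S. S \<in> Fs \<and> mS S = m}"
      have sl: "sidelen S = \<sigma>" if "S \<in> Fm" for S using that sl_m Fs by (auto simp: Fm_def \<sigma>_def)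
      obtain S0 where S0: "S0 \<in> Fs" "mS S0 = m" using m M_def by blast
      have \<sigma>0: "\<sigma> > 0" by (simp add: \<sigma>_def)
      have \<sigma>s0: "\<sigma> \<le> s0" using S0 sl[of S0] by (auto simp: Fm_def Fs_def P_def)
      have \<sigma>t: "\<sigma> \<le> t" using S0 sl[of S0] FS by (auto simp: Fm_def Fs_def)
      have tA: "t \<le> A * t" using A t by simp
      have fFm: "finite Fm" "Fm \<subseteq> W" using Fs by (auto simp: Fm_def)
      have FmS: "\<forall>S\<in>Fm. sidelen S = \<sigma> \<and> S \<subseteq> cball x0 (A * t)"
        using sl FS by (auto simp: Fm_def Fs_def)
      have cnt: "real (card Fm) * \<sigma> ^ n \<le> K * (A * t) ^ n"
        unfolding n_def
        by (rule gc[rule_format, of \<sigma> "A * t" Fm x0, OF \<sigma>0 \<sigma>s0 order_trans[OF \<sigma>t tA] fFm FmS[rule_format]])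
      have "(\<Sum>S\<in>Fm. sidelen S powr a) = real (card Fm) * \<sigma> powr a" using sl by simp
      also have "\<dots> = real (card Fm) * \<sigma> ^ n * \<sigma> powr \<gamma>"
        using powr_split[OF \<sigma>0, of a n] by (simp add: \<gamma>_def)
      also have "\<dots> \<le> K * (A * t) ^ n * \<sigma> powr \<gamma>"
        by (rule mult_right_mono[OF cnt]) simp
      finally show "(\<Sum>S\<in>{S. S \<in> Fs \<and> mS S = m}. sidelen S powr a) \<le> K * (A * t) ^ n * (2 powr (- real_of_int m)) powr \<gamma>"
        by (simp add: Fm_def \<sigma>_def)
    qed
    also have "\<dots> = K * (A * t) ^ n * (\<Sum>m\<in>M. (2 powr (- real_of_int m)) powr \<gamma>)"
      by (simp add: sum_distrib_left)
    also have "\<dots> \<le> K * (A * t) ^ n * (t powr \<gamma> / (1 - q))"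
    proof (rule mult_left_mono)
      show "(\<Sum>m\<in>M. (2 powr (- real_of_int m)) powr \<gamma>) \<le> t powr \<gamma> / (1 - q)"
        unfolding q_def
      proof (rule dyadic_sum[OF _ g t])
        show "finite M" using Fs by (simp add: M_def)
        fix m assume "m \<in> M"
        then obtain S where S: "S \<in> Fs" "m = mS S" by (auto simp: M_def)
        hence "sidelen S = 2 powr (- real_of_int m)" using sl_m Fs by auto
        thus "2 powr (- real_of_int m) \<le> t" using S FS by (auto simp: Fs_def)
      qed
    qed (use K A t in simp)
    also have "\<dots> = K * A ^ n / (1 - q) * (t ^ n * t powr \<gamma>)" by (simp add: power_mult_distrib)
    also have "t ^ n * t powr \<gamma> = t powr a" using powr_split[OF t, of a n] by (simp add: \<gamma>_def)
    finally have small: "(\<Sum>S\<in>F - P. sidelen S powr a) \<le> K * A ^ n / (1 - q) * t powr a"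
      by (simp add: Fs_def)
    show ?thesis using split big small by (simp add: CG_def algebra_simps)
  qed
  show ?thesis by (rule exI[of _ CG], rule conjI[OF CG0]) (intro allI impI main; blast)
qed

end



context wsetup
begin

lemma finite_bound:
  assumes ch: "\<forall>p\<in>frontier \<Omega>. \<exists>e r h \<phi> M. chartP \<Omega> p e r h \<phi> M"
    and a: "real DIM('a) - 1 < a" and ab: "a < b"
  shows "\<exists>C>0. \<forall>Q\<in>W. \<forall>F. finite F \<longrightarrow> F \<subseteq> W \<longrightarrow>
           (\<Sum>S\<in>F. sidelen S powr a / long_dist Q S powr b) \<le> C * sidelen Q powr (a - b)"
proof -
  define A where "A = real DIM('a)"
  have A: "A \<ge> 1" unfolding A_def using DIM_positive[where 'a='a] by linarith
  obtain CG where CG: "CG \<ge> 0" and gb: "\<forall>t x0 F. 0 < t \<longrightarrow> finite F \<longrightarrow> F \<subseteq> W \<longrightarrow>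
           (\<forall>S\<in>F. sidelen S \<le> t \<and> S \<subseteq> cball x0 (A * t)) \<longrightarrow>
           (\<Sum>S\<in>F. sidelen S powr a) \<le> CG * t powr a"
    using Gbound[OF ch a A] by (elim exE conjE) (rule that; assumption)
  have a0: "a > 0" using a DIM_positive[where 'a='a] by linarith
  have b0: "b > 0" using a0 ab by linarith
  define q where "q = (2::real) powr (a - b)"
  have q: "0 < q" "q < 1" using ab by (auto simp: q_def powr_less_one)
  define C where "C = 2 powr b * CG / (1 - q) + 1"
  have C0: "C > 0" unfolding C_def using CG q by (simp add: add_nonneg_pos)
  have main: "(\<Sum>S\<in>F. sidelen S powr a / long_dist Q S powr b) \<le> C * sidelen Q powr (a - b)"
    if Q: "Q \<in> W" and F: "finite F" "F \<subseteq> W" for Q F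
  proof -
    define l where "l = sidelen Q"
    have l: "l > 0" unfolding l_def using sl_pos[OF Q] .
    obtain x0 where x0: "x0 \<in> Q" using S_ne[OF Q] by blast
    define D where "D S = long_dist Q S" for S
    have Dge: "l \<le> D S" "sidelen S \<le> D S" if "S \<in> W" for S
      using setdist_pos_le[of Q S] sl_pos[OF that] l
      unfolding D_def long_dist_def l_def by auto
    have Dpos: "D S > 0" if "S \<in> W" for S using Dge[OF that] l by linarith
    have Dcb: "S \<subseteq> cball x0 (A * D S)" if S: "S \<in> W" for S
    proof
      fix y assume y: "y \<in> S"
      obtain u v where uv: "u \<in> Q" "v \<in> S" "dist u v = setdist Q S"
        using setdist_compact_closed[OF S_compact[OF Q] compact_imp_closed[OF S_compact[OF S]] S_ne[OF Q] S_ne[OF S]]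
        by blast
      have "dist x0 y \<le> dist x0 u + dist u v + dist v y" by (metis dist_triangle order_trans add_right_mono dist_triangle)
      also have "\<dots> \<le> A * l + setdist Q S + A * sidelen S"
        using S_diam[OF Q x0 uv(1)] S_diam[OF S uv(2) y] uv(3) unfolding A_def l_def by linarith
      also have "\<dots> \<le> A * D S"
      proof -
        have "setdist Q S \<le> A * setdist Q S" using mult_right_mono[OF A setdist_pos_le[of Q S]] by simp
        thus ?thesis unfolding D_def long_dist_def l_def by (simp add: algebra_simps)
      qed
      finally show "y \<in> cball x0 (A * D S)" by simp
    qed
    define k where "k S = nat \<lceil>log 2 (D S / l)\<rceil>" for S
    define tt where "tt j = 2 powr real j * l" for j :: nat
    have ttpos: "tt j > 0" for j unfolding tt_def using l by simp
    have kfacts: "D S \<le> tt (k S) \<and> tt (k S) < 2 * D S" if S: "S \<in> W" for S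
    proof -
      have r1: "D S / l \<ge> 1" using Dge[OF S] l by simp
      hence lg0: "log 2 (D S / l) \<ge> 0" by simp
      have rk: "real (k S) = real_of_int \<lceil>log 2 (D S / l)\<rceil>" unfolding k_def using lg0 by simp
      have "D S / l = 2 powr (log 2 (D S / l))" using r1 by simp
      also have "\<dots> \<le> 2 powr real (k S)" unfolding rk by simp
      finally have 1: "D S \<le> tt (k S)" unfolding tt_def using l by (simp add: divide_le_eq)
      have "real (k S) < log 2 (D S / l) + 1" unfolding rk by linarith
      hence "2 powr real (k S) < 2 powr (log 2 (D S / l) + 1)" by simp
      also have "\<dots> = 2 * (D S / l)" using r1 by (simp add: powr_add)
      finally have "tt (k S) < 2 * D S" unfolding tt_def using l by (simp add: field_simps)
      thus ?thesis using 1 by simp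
    qed
    have step1: "sidelen S powr a / D S powr b \<le> 2 powr b * sidelen S powr a / tt (k S) powr b"
      if S: "S \<in> W" for S
    proof -
      have "tt (k S) / 2 \<le> D S" using kfacts[OF S] by simp
      hence "(tt (k S) / 2) powr b \<le> D S powr b" using b0 less_imp_le[OF ttpos[of "k S"]] by (intro powr_mono2) auto
      hence "tt (k S) powr b / 2 powr b \<le> D S powr b" using ttpos by (simp add: powr_divide)
      hence le: "tt (k S) powr b \<le> 2 powr b * D S powr b" by (simp add: divide_le_eq mult.commute)
      have "sidelen S powr a / D S powr b = 2 powr b * sidelen S powr a / (2 powr b * D S powr b)" by simp
      also have "\<dots> \<le> 2 powr b * sidelen S powr a / tt (k S) powr b"
        using le ttpos[of "k S"] Dpos[OF S] by (intro divide_left_mono) (auto intro!: mult_pos_pos)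
      finally show ?thesis .
    qed
    have "(\<Sum>S\<in>F. sidelen S powr a / long_dist Q S powr b) \<le> (\<Sum>S\<in>F. 2 powr b * sidelen S powr a / tt (k S) powr b)"
      using step1 F unfolding D_def by (intro sum_mono) auto
    also have "\<dots> = (\<Sum>j\<in>k ` F. \<Sum>S\<in>{S. S \<in> F \<and> k S = j}. 2 powr b * sidelen S powr a / tt (k S) powr b)"
      by (rule sum.group[symmetric]) (use F in auto)
    also have "\<dots> \<le> (\<Sum>j\<in>k ` F. 2 powr b * CG * l powr (a - b) * q ^ j)"
    proof (rule sum_mono)
      fix j assume j: "j \<in> k ` F"
      define Fj where "Fj = {S. S \<in> F \<and> k S = j}"
      have "(\<Sum>S\<in>Fj. 2 powr b * sidelen S powr a / tt (k S) powr b) = 2 powr b / tt j powr b * (\<Sum>S\<in>Fj. sidelen S powr a)"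
        by (simp add: Fj_def sum_distrib_left)
      also have "(\<Sum>S\<in>Fj. sidelen S powr a) \<le> CG * tt j powr a"
      proof -
        have "\<forall>S\<in>Fj. sidelen S \<le> tt j \<and> S \<subseteq> cball x0 (A * tt j)"
        proof
          fix S assume S: "S \<in> Fj"
          hence SW: "S \<in> W" and kS: "k S = j" using F by (auto simp: Fj_def)
          have "sidelen S \<le> tt j" using Dge(2)[OF SW] kfacts[OF SW] kS by simp
          moreover have "A * D S \<le> A * tt j" using kfacts[OF SW] kS A by simp
          hence "S \<subseteq> cball x0 (A * tt j)" using Dcb[OF SW] by (meson order_trans subset_cball)
          ultimately show "sidelen S \<le> tt j \<and> S \<subseteq> cball x0 (A * tt j)" by simp
        qed
        moreover have "finite Fj" "Fj \<subseteq> W" using F by (auto simp: Fj_def)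
        ultimately show ?thesis using gb ttpos[of j] by blast
      qed
      hence "2 powr b / tt j powr b * (\<Sum>S\<in>Fj. sidelen S powr a) \<le> 2 powr b / tt j powr b * (CG * tt j powr a)"
        by (intro mult_left_mono) auto
      also have "\<dots> = 2 powr b * CG * (tt j powr a / tt j powr b)" by simp
      also have "tt j powr a / tt j powr b = tt j powr (a - b)" by (simp add: powr_diff)
      also have "tt j powr (a - b) = l powr (a - b) * q ^ j"
      proof -
        have "tt j powr (a - b) = (2 powr real j) powr (a - b) * l powr (a - b)"
          unfolding tt_def using l by (simp add: powr_mult)
        also have "(2 powr real j) powr (a - b) = q powr real j"
          unfolding q_def by (simp add: powr_powr mult.commute)
        also have "q powr real j = q ^ j" using q by (simp add: powr_realpow)
        finally show ?thesis by simp
      qed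
      finally show "(\<Sum>S\<in>{S. S \<in> F \<and> k S = j}. 2 powr b * sidelen S powr a / tt (k S) powr b) \<le> 2 powr b * CG * l powr (a - b) * q ^ j"
        unfolding Fj_def by (simp add: ac_simps)
    qed
    also have "\<dots> = 2 powr b * CG * l powr (a - b) * (\<Sum>j\<in>k ` F. q ^ j)" by (simp add: sum_distrib_left)
    also have "\<dots> \<le> 2 powr b * CG * l powr (a - b) * (1 / (1 - q))"
      using CG q F by (intro mult_left_mono geom_finite_le) auto
    also have "\<dots> \<le> C * l powr (a - b)"
      unfolding C_def using q by (simp add: algebra_simps)
    finally show ?thesis by (simp add: l_def)
  qed
  show ?thesis using C0 main by blast
qed

end



theorem lemma3p13:
  fixes \<Omega> :: "'a::euclidean_space set" and W :: "'a set set" and a b :: real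
  assumes "lipschitz_domain \<Omega>" and "whitney_covering \<Omega> W"
    and "real DIM('a) - 1 < a" and "a < b"
  shows "\<exists>C>0. \<forall>Q\<in>W.
           (\<lambda>S. sidelen S powr a / long_dist Q S powr b) summable_on W \<and>
           (\<Sum>\<^sub>\<infinity>S\<in>W. sidelen S powr a / long_dist Q S powr b) \<le> C * sidelen Q powr (a - b)"
proof (cases "W = {}")
  case True
  show ?thesis by (rule exI[of _ 1]) (simp add: True)
next
  case False
  have L: "open \<Omega> \<and> connected \<Omega> \<and> \<Omega> \<noteq> {} \<and> bounded \<Omega> \<and>
    (\<forall>p\<in>frontier \<Omega>. \<exists>e r h \<phi> M. chartP \<Omega> p e r h \<phi> M)"
    using assms(1) unfolding lipschitz_domain_def chartP_def pr_def .
  have Wc: "(\<forall>Q\<in>W. dyadic_cube Q) \<and>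
    (\<forall>Q\<in>W. \<forall>S\<in>W. Q \<noteq> S \<longrightarrow> interior Q \<inter> interior S = {}) \<and>
    \<Union>W = \<Omega> \<and>
    (\<exists>CW>0. \<forall>Q\<in>W. CW * sidelen Q \<le> setdist Q (frontier \<Omega>) \<and>
                    setdist Q (frontier \<Omega>) \<le> 4 * CW * sidelen Q)"
    using assms(2) unfolding whitney_covering_def by (elim conjE) (intro conjI)
  then obtain CW where CW: "CW > 0" "\<forall>Q\<in>W. CW * sidelen Q \<le> setdist Q (frontier \<Omega>) \<and>
                    setdist Q (frontier \<Omega>) \<le> 4 * CW * sidelen Q" by blast
  have fne: "frontier \<Omega> \<noteq> {}"
  proof
    assume fe: "frontier \<Omega> = {}"
    obtain Q where Q: "Q \<in> W" using False by blast
    then obtain m k where "Q = dyad m k" using Wc by (auto simp: dyadic_cube_def)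
    hence "sidelen Q > 0" by (simp add: sidelen_dyad)
    moreover have "CW * sidelen Q \<le> 0" using CW Q fe by fastforce
    ultimately show False using CW(1) by (simp add: mult_le_0_iff)
  qed
  have op: "open \<Omega>" and bd: "bounded \<Omega>" using L by simp_all
  have dy: "\<forall>Q\<in>W. dyadic_cube Q" and dis: "\<forall>Q\<in>W. \<forall>S\<in>W. Q \<noteq> S \<longrightarrow> interior Q \<inter> interior S = {}"
    and un: "\<Union>W = \<Omega>" using Wc by simp_all
  interpret wsetup \<Omega> W CW
    by (rule wsetup.intro[OF op bd fne dy dis un CW(1) CW(2)])
  obtain C where C: "C > 0" and fb: "\<forall>Q\<in>W. \<forall>F. finite F \<longrightarrow> F \<subseteq> W \<longrightarrow>
           (\<Sum>S\<in>F. sidelen S powr a / long_dist Q S powr b) \<le> C * sidelen Q powr (a - b)"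
    using finite_bound[OF conjunct2[OF conjunct2[OF conjunct2[OF conjunct2[OF L]]]] assms(3,4)]
    by (elim exE conjE) (rule that; assumption)
  have "(\<lambda>S. sidelen S powr a / long_dist Q S powr b) summable_on W \<and>
        (\<Sum>\<^sub>\<infinity>S\<in>W. sidelen S powr a / long_dist Q S powr b) \<le> C * sidelen Q powr (a - b)"
    if Q: "Q \<in> W" for Q
  proof -
    have fin: "\<And>F. finite F \<Longrightarrow> F \<subseteq> W \<Longrightarrow>
       (\<Sum>S\<in>F. sidelen S powr a / long_dist Q S powr b) \<le> C * sidelen Q powr (a - b)"
      using fb Q by blast
    have sm: "(\<lambda>S. sidelen S powr a / long_dist Q S powr b) summable_on W"
    proof (rule nonneg_bounded_partial_sums_imp_summable_on)
      show "\<And>x. x \<in> W \<Longrightarrow> 0 \<le> sidelen x powr a / long_dist Q x powr b" by simp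
      show "\<forall>\<^sub>F X in finite_subsets_at_top W. (\<Sum>S\<in>X. sidelen S powr a / long_dist Q S powr b) \<le> C * sidelen Q powr (a - b)"
        by (rule eventually_finite_subsets_at_top_weakI) (rule fin)
    qed
    moreover have "(\<Sum>\<^sub>\<infinity>S\<in>W. sidelen S powr a / long_dist Q S powr b) \<le> C * sidelen Q powr (a - b)"
      by (rule infsum_le_finite_sums[OF sm fin])
    ultimately show ?thesis by blast
  qed
  thus ?thesis using C by blast
qed


end
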